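(* Assume $R_1(i)\neq0$ for $2\le i\le I-1$, $R_2(j)\neq0$ for $2\le j\le J-1$, and that $\alpha,\beta\in\mathbb R$ satisfy $(\alpha+1)R_1(I-1)+(\eta_{1,I-1}^n-\epsilon_1)\neq0$ and $(\beta-1)R_2(2)+(\eta_{2,2}^n+\epsilon_2)\neq0$. Let $(e_1^m,e_2^m)_{m\ge0}$ be the error iterates of the linearized implicit Schwarz iteration for the Burgers equations with the Robin-type (optimized) interface condition defined below. Then, with $$\bar\rho=-\frac{(\alpha+1)(\eta_{2,2}^n+\epsilon_2)-R_2(2)}{(\alpha+1)R_1(I-1)+\eta_{1,I-1}^n-\epsilon_1}\cdot\frac{(\beta-1)(\eta_{1,I-1}^n-\epsilon_1)-R_1(I-1)}{(\beta-1)R_2(2)+\eta_{2,2}^n+\epsilon_2},$$ one has, for every $m\ge1$, $e_{1,i}^{m+2}=\bar\rho\,e_{1,i}^m$ for all $1\le i\le I$ and $e_{2,j}^{m+2}=\bar\rho\,e_{2,j}^m$ for all $1\le j\le J$.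
   Context: Setting (implicit scheme, node-dependent linearized advection). Integers $I,J\ge3$; grid 1 has nodes $1,\dots,I$, grid 2 has nodes $1,\dots,J$, with node $I-1$ of grid 1 coinciding with node 1 of grid 2 and node $I$ of grid 1 coinciding with node 2 of grid 2. Real constants $\epsilon_k,\gamma_k$ and real numbers $\eta_{1,i}^n$ ($2\le i\le I-1$), $\eta_{2,j}^n$ ($2\le j\le J-1$) are given. Define recursively $R_1(2)=1+2\epsilon_1+\gamma_1$, $R_1(i)=1+2\epsilon_1+\gamma_1+\dfrac{(\eta_{1,i-1}^n-\epsilon_1)(\eta_{1,i}^n+\epsilon_1)}{R_1(i-1)}$ for $i=3,\dots,I-1$; $R_2(J-1)=1+2\epsilon_2+\gamma_2$, $R_2(j)=1+2\epsilon_2+\gamma_2+\dfrac{(\eta_{2,j}^n-\epsilon_2)(\eta_{2,j+1}^n+\epsilon_2)}{R_2(j+1)}$ for $j=J-2,\dots,2$. Error iteration with optimized interface condition: $e_1^0\in\mathbb R^I$, $e_2^0\in\mathbb R^J$ arbitrary; for $m\ge1$: $e_{1,1}^m=0$; $-(\eta_{1,i}^n+\epsilon_1)e_{1,i-1}^m+(1+2\epsilon_1+\gamma_1)e_{1,i}^m+(\eta_{1,i}^n-\epsilon_1)e_{1,i+1}^m=0$ for $2\le i\le I-1$; $(e_{1,I}^m-e_{1,I-1}^m)+\alpha e_{1,I}^m=(e_{2,2}^{m-1}-e_{2,1}^{m-1})+\alpha e_{2,2}^{m-1}$; $e_{2,J}^m=0$; $-(\eta_{2,j}^n+\epsilon_2)e_{2,j-1}^m+(1+2\epsilon_2+\gamma_2)e_{2,j}^m+(\eta_{2,j}^n-\epsilon_2)e_{2,j+1}^m=0$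 for $2\le j\le J-1$; $(e_{2,2}^m-e_{2,1}^m)+\beta e_{2,1}^m=(e_{1,I}^{m-1}-e_{1,I-1}^{m-1})+\beta e_{1,I-1}^{m-1}$. *)

theory Defs
  imports Main "HOL.Real"
begin

fun R1 :: "real \<Rightarrow> real \<Rightarrow> (nat \<Rightarrow> real) \<Rightarrow> nat \<Rightarrow> real" where
  "R1 eps gam eta i =
     (if i \<le> 2 then 1 + 2 * eps + gam
      else 1 + 2 * eps + gam + (eta (i - 1) - eps) * (eta i + eps) / R1 eps gam eta (i - 1))"

function R2 :: "real \<Rightarrow> real \<Rightarrow> (nat \<Rightarrow> real) \<Rightarrow> nat \<Rightarrow> nat \<Rightarrow> real" where
  "R2 eps gam eta J j =
     (if J - 1 \<le> j then 1 + 2 * eps + gam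
      else 1 + 2 * eps + gam + (eta j - eps) * (eta (j + 1) + eps) / R2 eps gam eta J (j + 1))"
  by pat_completeness auto
termination
  by (relation "measure (\<lambda>(eps, gam, eta, J, j). J - j)") auto

end

theory Submission
  imports Defs
begin

declare R1.simps[simp del] R2.simps[simp del]

lemma fwd:
  fixes e :: "nat \<Rightarrow> real"
  assumes e1: "e 1 = 0"
    and int: "\<And>i. 2 \<le> i \<Longrightarrow> i \<le> I - 1 \<Longrightarrow>
       - (eta i + eps) * e (i - 1) + (1 + 2 * eps + gam) * e i + (eta i - eps) * e (i + 1) = 0"
    and nz: "\<And>i. 2 \<le> i \<Longrightarrow> i \<le> I - 1 \<Longrightarrow> R1 eps gam eta i \<noteq> 0"
    and j: "2 \<le> j" "j \<le> I - 1"
  shows "R1 eps gam eta j * e j = - (eta j - eps) * e (j + 1)"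
  using j(1) j
proof (induction j rule: dec_induct)
  case base
  have "R1 eps gam eta 2 = 1 + 2 * eps + gam" by (subst R1.simps) simp
  with int[of 2] base e1 show ?case by (simp add: algebra_simps)
next
  case (step n)
  have hn: "R1 eps gam eta n * e n = - (eta n - eps) * e (n + 1)" using step by simp
  have Rn: "R1 eps gam eta n \<noteq> 0" using step nz by simp
  have R: "R1 eps gam eta (Suc n) = 1 + 2 * eps + gam
      + (eta n - eps) * (eta (Suc n) + eps) / R1 eps gam eta n"
    using step by (subst R1.simps) simp
  have en: "e n = - (eta n - eps) * e (n + 1) / R1 eps gam eta n"
    using hn Rn by (simp add: field_simps)
  have eq: "- (eta (Suc n) + eps) * e n + (1 + 2 * eps + gam) * e (Suc n)
      + (eta (Suc n) - eps) * e (Suc n + 1) = 0"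
    using int[of "Suc n"] step by simp
  show ?case unfolding R using eq en Rn
    by (simp add: field_simps)
qed

lemma bwd:
  fixes e :: "nat \<Rightarrow> real"
  assumes eJ: "e J = 0" and J3: "J \<ge> 3"
    and int: "\<And>j. 2 \<le> j \<Longrightarrow> j \<le> J - 1 \<Longrightarrow>
       - (eta j + eps) * e (j - 1) + (1 + 2 * eps + gam) * e j + (eta j - eps) * e (j + 1) = 0"
    and nz: "\<And>j. 2 \<le> j \<Longrightarrow> j \<le> J - 1 \<Longrightarrow> R2 eps gam eta J j \<noteq> 0"
    and j: "2 \<le> j" "j \<le> J - 1"
  shows "R2 eps gam eta J j * e j = (eta j + eps) * e (j - 1)"
  using j(2) j
proof (induction j rule: inc_induct)
  case base
  have "R2 eps gam eta J (J - 1) = 1 + 2 * eps + gam" by (subst R2.simps) simp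
  moreover have "J - 1 + 1 = J" using J3 by simp
  ultimately show ?case using int[of "J - 1"] base eJ by (simp add: algebra_simps)
next
  case (step n)
  have hn: "R2 eps gam eta J (Suc n) * e (Suc n) = (eta (Suc n) + eps) * e n" using step by simp
  have Rn: "R2 eps gam eta J (Suc n) \<noteq> 0" using step nz by simp
  have R: "R2 eps gam eta J n = 1 + 2 * eps + gam
      + (eta n - eps) * (eta (Suc n) + eps) / R2 eps gam eta J (Suc n)"
    using step by (subst R2.simps) simp
  have en: "e (Suc n) = (eta (Suc n) + eps) * e n / R2 eps gam eta J (Suc n)"
    using hn Rn by (simp add: field_simps)
  have eq: "- (eta n + eps) * e (n - 1) + (1 + 2 * eps + gam) * e n
      + (eta n - eps) * e (Suc n) = 0"
    using int[of n] step by simp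
  show ?case unfolding R using eq en Rn
    by (simp add: field_simps)
qed

lemma alg_helper:
  fixes R S P Q d1 d2 x :: real
  assumes "R \<noteq> 0" "S \<noteq> 0"
  shows "R * (P/S * (S * ((R - Q)/R * x) / d2)) / d1 = - (P / d1) * ((Q - R) / d2) * x"
    "S * ((R - Q)/R * (R * (P/S * x) / d1)) / d2 = - (P / d1) * ((Q - R) / d2) * x"
proof -
  have e: "R - Q = - (Q - R)" by simp
  show "R * (P/S * (S * ((R - Q)/R * x) / d2)) / d1 = - (P / d1) * ((Q - R) / d2) * x"
    unfolding e using assms by (cases "d1 = 0"; cases "d2 = 0") (simp_all add: field_simps)
  show "S * ((R - Q)/R * (R * (P/S * x) / d1)) / d2 = - (P / d1) * ((Q - R) / d2) * x"
    unfolding e using assms by (cases "d1 = 0"; cases "d2 = 0") (simp_all add: field_simps)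
qed

theorem proposition5p4:
  fixes I J :: nat
    and eps1 gam1 eps2 gam2 \<alpha> \<beta> :: real
    and eta1 eta2 :: "nat \<Rightarrow> real"
    and e1 e2 :: "nat \<Rightarrow> nat \<Rightarrow> real"
  assumes "I \<ge> 3" and "J \<ge> 3"
    and R1_nz: "\<And>i. 2 \<le> i \<Longrightarrow> i \<le> I - 1 \<Longrightarrow> R1 eps1 gam1 eta1 i \<noteq> 0"
    and R2_nz: "\<And>j. 2 \<le> j \<Longrightarrow> j \<le> J - 1 \<Longrightarrow> R2 eps2 gam2 eta2 J j \<noteq> 0"
    and alpha_nz: "(\<alpha> + 1) * R1 eps1 gam1 eta1 (I - 1) + (eta1 (I - 1) - eps1) \<noteq> 0"
    and beta_nz: "(\<beta> - 1) * R2 eps2 gam2 eta2 J 2 + (eta2 2 + eps2) \<noteq> 0"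
    and bc1: "\<And>m. m \<ge> 1 \<Longrightarrow> e1 m 1 = 0"
    and int1: "\<And>m i. m \<ge> 1 \<Longrightarrow> 2 \<le> i \<Longrightarrow> i \<le> I - 1 \<Longrightarrow>
       - (eta1 i + eps1) * e1 m (i - 1) + (1 + 2 * eps1 + gam1) * e1 m i
       + (eta1 i - eps1) * e1 m (i + 1) = 0"
    and if1: "\<And>m. m \<ge> 1 \<Longrightarrow>
       (e1 m I - e1 m (I - 1)) + \<alpha> * e1 m I
       = (e2 (m - 1) 2 - e2 (m - 1) 1) + \<alpha> * e2 (m - 1) 2"
    and bc2: "\<And>m. m \<ge> 1 \<Longrightarrow> e2 m J = 0"
    and int2: "\<And>m j. m \<ge> 1 \<Longrightarrow> 2 \<le> j \<Longrightarrow> j \<le> J - 1 \<Longrightarrow>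
       - (eta2 j + eps2) * e2 m (j - 1) + (1 + 2 * eps2 + gam2) * e2 m j
       + (eta2 j - eps2) * e2 m (j + 1) = 0"
    and if2: "\<And>m. m \<ge> 1 \<Longrightarrow>
       (e2 m 2 - e2 m 1) + \<beta> * e2 m 1
       = (e1 (m - 1) I - e1 (m - 1) (I - 1)) + \<beta> * e1 (m - 1) (I - 1)"
  defines "\<rho> \<equiv> - (((\<alpha> + 1) * (eta2 2 + eps2) - R2 eps2 gam2 eta2 J 2)
                   / ((\<alpha> + 1) * R1 eps1 gam1 eta1 (I - 1) + eta1 (I - 1) - eps1))
                * (((\<beta> - 1) * (eta1 (I - 1) - eps1) - R1 eps1 gam1 eta1 (I - 1))
                   / ((\<beta> - 1) * R2 eps2 gam2 eta2 J 2 + eta2 2 + eps2))"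
  shows "\<forall>m \<ge> 1. (\<forall>i. 1 \<le> i \<and> i \<le> I \<longrightarrow> e1 (m + 2) i = \<rho> * e1 m i)
                 \<and> (\<forall>j. 1 \<le> j \<and> j \<le> J \<longrightarrow> e2 (m + 2) j = \<rho> * e2 m j)"
proof (intro allI impI)
  fix m :: nat assume m: "m \<ge> 1"
  define R where "R = R1 eps1 gam1 eta1 (I - 1)"
  define S where "S = R2 eps2 gam2 eta2 J 2"
  define b where "b = eta1 (I - 1) - eps1"
  define a where "a = eta2 2 + eps2"
  have RI: "R \<noteq> 0" unfolding R_def using R1_nz \<open>I \<ge> 3\<close> by simp
  have SJ: "S \<noteq> 0" unfolding S_def using R2_nz \<open>J \<ge> 3\<close> by simp
  have D1: "(\<alpha> + 1) * R + b \<noteq> 0" using alpha_nz unfolding R_def b_def .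
  have D2: "(\<beta> - 1) * S + a \<noteq> 0" using beta_nz unfolding S_def a_def .
  have I1: "I - 1 + 1 = I" using \<open>I \<ge> 3\<close> by simp
  have F: "\<And>k i. k \<ge> 1 \<Longrightarrow> 2 \<le> i \<Longrightarrow> i \<le> I - 1 \<Longrightarrow>
      R1 eps1 gam1 eta1 i * e1 k i = - (eta1 i - eps1) * e1 k (i + 1)"
  proof -
    fix k i assume h: "(k::nat) \<ge> 1" "2 \<le> i" "i \<le> I - 1"
    show "?thesis k i"
      by (rule fwd[where I=I and e="e1 k"]) (use h bc1 int1 R1_nz in auto)
  qed
  have B: "\<And>k j. k \<ge> 1 \<Longrightarrow> 2 \<le> j \<Longrightarrow> j \<le> J - 1 \<Longrightarrow>
      R2 eps2 gam2 eta2 J j * e2 k j = (eta2 j + eps2) * e2 k (j - 1)"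
  proof -
    fix k j assume h: "(k::nat) \<ge> 1" "2 \<le> j" "j \<le> J - 1"
    show "?thesis k j"
      by (rule bwd[where J=J and e="e2 k"]) (use h bc2 int2 R2_nz \<open>J \<ge> 3\<close> in auto)
  qed
  have F1: "\<And>k. k \<ge> 1 \<Longrightarrow> R * e1 k (I - 1) = - b * e1 k I"
    unfolding R_def b_def using F[of _ "I - 1"] \<open>I \<ge> 3\<close> I1 by simp
  have B1: "\<And>k. k \<ge> 1 \<Longrightarrow> S * e2 k 2 = a * e2 k 1"
    unfolding S_def a_def using B[of _ 2] \<open>J \<ge> 3\<close> by simp
  have eI: "\<And>k. k \<ge> 1 \<Longrightarrow> e1 (k + 1) I =
       R * ((e2 k 2 - e2 k 1) + \<alpha> * e2 k 2) / ((\<alpha> + 1) * R + b)"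
  proof -
    fix k :: nat assume k: "k \<ge> 1"
    have d: "(\<alpha> + 1) * R + b \<noteq> 0" using alpha_nz unfolding R_def b_def .
    have h1: "(e1 (k+1) I - e1 (k+1) (I - 1)) + \<alpha> * e1 (k+1) I
       = (e2 k 2 - e2 k 1) + \<alpha> * e2 k 2" using if1[of "k+1"] by simp
    have h2: "e1 (k+1) (I - 1) = - b * e1 (k+1) I / R" using F1[of "k+1"] RI
      by (simp add: field_simps)
    have "((\<alpha> + 1) * R + b) * e1 (k+1) I = R * ((e2 k 2 - e2 k 1) + \<alpha> * e2 k 2)"
    proof -
      have "R * ((e2 k 2 - e2 k 1) + \<alpha> * e2 k 2) = R * ((\<alpha>+1) * e1 (k+1) I) - R * e1 (k+1) (I - 1)"
      proof -
        have g: "(e2 k 2 - e2 k 1) + \<alpha> * e2 k 2 = (\<alpha>+1) * e1 (k+1) I - e1 (k+1) (I - 1)"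
          using h1 by (simp add: algebra_simps)
        show ?thesis unfolding g by (simp add: algebra_simps)
      qed
      also have "\<dots> = ((\<alpha> + 1) * R + b) * e1 (k+1) I" using F1[of "k+1"] by (simp add: algebra_simps)
      finally show ?thesis by simp
    qed
    then show "?thesis k" using d by (simp add: field_simps)
  qed
  have e21: "\<And>k. k \<ge> 1 \<Longrightarrow> e2 (k + 1) 1 =
       S * ((e1 k I - e1 k (I - 1)) + \<beta> * e1 k (I - 1)) / ((\<beta> - 1) * S + a)"
  proof -
    fix k :: nat assume k: "k \<ge> 1"
    have d: "(\<beta> - 1) * S + a \<noteq> 0" using beta_nz unfolding S_def a_def .
    have h1: "(e2 (k+1) 2 - e2 (k+1) 1) + \<beta> * e2 (k+1) 1
       = (e1 k I - e1 k (I - 1)) + \<beta> * e1 k (I - 1)" using if2[of "k+1"] by simp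
    have h2: "e2 (k+1) 2 = a * e2 (k+1) 1 / S" using B1[of "k+1"] SJ
      by (simp add: field_simps)
    have "((\<beta> - 1) * S + a) * e2 (k+1) 1 = S * ((e1 k I - e1 k (I - 1)) + \<beta> * e1 k (I - 1))"
    proof -
      have "S * ((e1 k I - e1 k (I - 1)) + \<beta> * e1 k (I - 1)) = S * e2 (k+1) 2 + S * ((\<beta> - 1) * e2 (k+1) 1)"
      proof -
        have g: "(e1 k I - e1 k (I - 1)) + \<beta> * e1 k (I - 1) = e2 (k+1) 2 + (\<beta> - 1) * e2 (k+1) 1"
          using h1 by (simp add: algebra_simps)
        show ?thesis unfolding g by (simp add: algebra_simps)
      qed
      also have "\<dots> = ((\<beta> - 1) * S + a) * e2 (k+1) 1" using B1[of "k+1"] by (simp add: algebra_simps)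
      finally show ?thesis by simp
    qed
    then show "?thesis k" using d by (simp add: field_simps)
  qed
  have rho: "\<rho> = - (((\<alpha> + 1) * a - S) / ((\<alpha> + 1) * R + b)) * (((\<beta> - 1) * b - R) / ((\<beta> - 1) * S + a))"
    unfolding \<rho>_def R_def S_def a_def b_def by (simp add: algebra_simps)
  have gform: "\<And>k. k \<ge> 1 \<Longrightarrow> (e2 k 2 - e2 k 1) + \<alpha> * e2 k 2 = ((\<alpha>+1)*a - S)/S * e2 k 1"
  proof -
    fix k :: nat assume k: "k \<ge> 1"
    have x: "e2 k 2 = a * e2 k 1 / S" using B1[OF k] SJ by (simp add: field_simps)
    show "?thesis k" unfolding x using SJ by (simp add: field_simps)
  qed
  have hform: "\<And>k. k \<ge> 1 \<Longrightarrow> (e1 k I - e1 k (I - 1)) + \<beta> * e1 k (I - 1) = (R - (\<beta>-1)*b)/R * e1 k I"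
  proof -
    fix k :: nat assume k: "k \<ge> 1"
    have x: "e1 k (I - 1) = - b * e1 k I / R" using F1[OF k] RI by (simp add: field_simps)
    show "?thesis k" unfolding x using RI by (simp add: field_simps)
  qed
  have alg: "\<And>x. R * (((\<alpha>+1)*a - S)/S * (S * ((R - (\<beta>-1)*b)/R * x) / ((\<beta> - 1) * S + a))) / ((\<alpha> + 1) * R + b) = \<rho> * x"
    "\<And>x. S * ((R - (\<beta>-1)*b)/R * (R * (((\<alpha>+1)*a - S)/S * x) / ((\<alpha> + 1) * R + b))) / ((\<beta> - 1) * S + a) = \<rho> * x"
  proof -
    fix x
    show "R * (((\<alpha>+1)*a - S)/S * (S * ((R - (\<beta>-1)*b)/R * x) / ((\<beta> - 1) * S + a))) / ((\<alpha> + 1) * R + b) = \<rho> * x"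
      unfolding rho alg_helper(1)[OF RI SJ] by simp
    show "S * ((R - (\<beta>-1)*b)/R * (R * (((\<alpha>+1)*a - S)/S * x) / ((\<alpha> + 1) * R + b))) / ((\<beta> - 1) * S + a) = \<rho> * x"
      unfolding rho alg_helper(2)[OF RI SJ] by simp
  qed
  have ge: "(1::nat) \<le> m + 1" by simp
  have topI: "e1 (m + 2) I = \<rho> * e1 m I"
  proof -
    have "e1 (m + 2) I = e1 (m + 1 + 1) I" by simp
    also have "\<dots> = R * (((\<alpha>+1)*a - S)/S * e2 (m+1) 1) / ((\<alpha> + 1) * R + b)"
      unfolding eI[OF ge] gform[OF ge] ..
    also have "\<dots> = R * (((\<alpha>+1)*a - S)/S * (S * ((R - (\<beta>-1)*b)/R * e1 m I) / ((\<beta> - 1) * S + a))) / ((\<alpha> + 1) * R + b)"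
      unfolding e21[OF m] hform[OF m] ..
    also have "\<dots> = \<rho> * e1 m I" by (rule alg(1))
    finally show ?thesis .
  qed
  have bot2: "e2 (m + 2) 1 = \<rho> * e2 m 1"
  proof -
    have "e2 (m + 2) 1 = e2 (m + 1 + 1) 1" by simp
    also have "\<dots> = S * ((R - (\<beta>-1)*b)/R * e1 (m+1) I) / ((\<beta> - 1) * S + a)"
      unfolding e21[OF ge] hform[OF ge] ..
    also have "\<dots> = S * ((R - (\<beta>-1)*b)/R * (R * (((\<alpha>+1)*a - S)/S * e2 m 1) / ((\<alpha> + 1) * R + b))) / ((\<beta> - 1) * S + a)"
      unfolding eI[OF m] gform[OF m] ..
    also have "\<dots> = \<rho> * e2 m 1" by (rule alg(2))
    finally show ?thesis .
  qed
  have G1: "e1 (m + 2) i = \<rho> * e1 m i" if "1 \<le> i" "i \<le> I" for i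
    using that(2) that
  proof (induction i rule: inc_induct)
    case base then show ?case using topI by simp
  next
    case (step n)
    show ?case
    proof (cases "n = 1")
      case True then show ?thesis using bc1 m by simp
    next
      case False
      then have n: "2 \<le> n" "n \<le> I - 1" using step by auto
      have r: "R1 eps1 gam1 eta1 n \<noteq> 0" using R1_nz n by simp
      have a1: "e1 (m+2) n = - (eta1 n - eps1) * e1 (m+2) (Suc n) / R1 eps1 gam1 eta1 n"
        using F[of "m+2" n] n r by (simp add: field_simps)
      have a2: "e1 m n = - (eta1 n - eps1) * e1 m (Suc n) / R1 eps1 gam1 eta1 n"
        using F[of m n] n r m by (simp add: field_simps)
      show ?thesis unfolding a1 a2 using step by simp
    qed
  qed
  have G2: "e2 (m + 2) j = \<rho> * e2 m j" if "1 \<le> j" "j \<le> J" for j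
    using that(1) that
  proof (induction j rule: dec_induct)
    case base then show ?case using bot2 by simp
  next
    case (step n)
    show ?case
    proof (cases "Suc n = J")
      case True then show ?thesis using bc2 m by simp
    next
      case False
      then have n: "2 \<le> Suc n" "Suc n \<le> J - 1" using step by auto
      have r: "R2 eps2 gam2 eta2 J (Suc n) \<noteq> 0" using R2_nz n by simp
      have a1: "e2 (m+2) (Suc n) = (eta2 (Suc n) + eps2) * e2 (m+2) n / R2 eps2 gam2 eta2 J (Suc n)"
        using B[of "m+2" "Suc n"] n r by (simp add: field_simps)
      have a2: "e2 m (Suc n) = (eta2 (Suc n) + eps2) * e2 m n / R2 eps2 gam2 eta2 J (Suc n)"
        using B[of m "Suc n"] n r m by (simp add: field_simps)
      show ?thesis unfolding a1 a2 using step by simp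
    qed
  qed
  show "(\<forall>i. 1 \<le> i \<and> i \<le> I \<longrightarrow> e1 (m + 2) i = \<rho> * e1 m i)
                 \<and> (\<forall>j. 1 \<le> j \<and> j \<le> J \<longrightarrow> e2 (m + 2) j = \<rho> * e2 m j)"
    using G1 G2 by blast
qed

end
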